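(* Let $\Sigma$ be an alphabet with $|\Sigma|\ge3$ and $k\ge1$. A function $f\colon(\Sigma^* )^k\to\Sigma^*$ is congruence preserving if and only if there exist $n\in\mathbb{N}$, words $w_0,\ldots,w_n\in\Sigma^*$, exponents $p_1,\ldots,p_n\in\mathbb{N}$ and indices $i_1,\ldots,i_n\in\{1,\ldots,k\}$ such that for all $x_1,\ldots,x_k\in\Sigma^*$, $$f(x_1,\ldots,x_k)=w_0\,x_{i_1}^{p_1}\,w_1\,x_{i_2}^{p_2}\,w_2\cdots x_{i_n}^{p_n}\,w_n.$$
   Context: $\Sigma^*$ is the free monoid over $\Sigma$ (finite words, concatenation, empty word $\varepsilon$); $x^p$ denotes the concatenation of $p$ copies of $x$. A congruence on $\Sigma^*$ is an equivalence relation $\sim$ such that $u\sim v$ and $u'\sim v'$ imply $uu'\sim vv'$. A function $f\colon(\Sigma^* )^k\to\Sigma^*$ is congruence preserving if for every congruence $\sim$ on $\Sigma^*$ and all $u_1,\ldots,u_k,v_1,\ldots,v_k\in\Sigma^*$ with $u_i\sim v_i$ for all $i$, we have $f(u_1,\ldots,u_k)\sim f(v_1,\ldots,v_k)$. *)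

theory Defs
  imports Main
begin

definition congruence :: "('a list \<times> 'a list) set \<Rightarrow> bool" where
  "congruence R \<longleftrightarrow> equiv UNIV R \<and>
     (\<forall>u v u' v'. (u, v) \<in> R \<longrightarrow> (u', v') \<in> R \<longrightarrow> (u @ u', v @ v') \<in> R)"

text \<open>A k-ary function on words is represented as a function on lists of words;
  only argument lists of length k matter.\<close>
definition congruence_preserving :: "nat \<Rightarrow> ('a list list \<Rightarrow> 'a list) \<Rightarrow> bool" where
  "congruence_preserving k f \<longleftrightarrow>
     (\<forall>R us vs. congruence R \<longrightarrow> length us = k \<longrightarrow> length vs = k \<longrightarrow>
        (\<forall>i<k. (us ! i, vs ! i) \<in> R) \<longrightarrow> (f us, f vs) \<in> R)"

definition word_pow :: "'a list \<Rightarrow> nat \<Rightarrow> 'a list" where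
  "word_pow x p = concat (replicate p x)"

end

theory Submission imports Defs "HOL-Library.Sublist" begin


definition hom :: "('a \<Rightarrow> 'a list) \<Rightarrow> 'a list \<Rightarrow> 'a list" where
  "hom \<sigma> w = concat (map \<sigma> w)"

lemma hom_simps[simp]: "hom \<sigma> [] = []" "hom \<sigma> (x # w) = \<sigma> x @ hom \<sigma> w"
  "hom \<sigma> (u @ v) = hom \<sigma> u @ hom \<sigma> v"
  by (simp_all add: hom_def)

definition ump :: "('a list \<Rightarrow> 'a list) \<Rightarrow> bool" where
  "ump g \<longleftrightarrow> (\<forall>\<sigma> x y. hom \<sigma> x = hom \<sigma> y \<longrightarrow> hom \<sigma> (g x) = hom \<sigma> (g y))"

definition lam :: "'a \<Rightarrow> 'a \<Rightarrow> 'a list \<Rightarrow> 'a list" where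
  "lam c d = map (\<lambda>x. if x = c then c else d)"

definition era :: "'a \<Rightarrow> 'a list \<Rightarrow> 'a list" where
  "era c = filter (\<lambda>x. x \<noteq> c)"

definition sub :: "'a \<Rightarrow> 'a list \<Rightarrow> 'a list \<Rightarrow> 'a list" where
  "sub t A = hom (\<lambda>x. if x = t then A else [x])"

lemma lam_hom: "lam c d = hom (\<lambda>x. [if x = c then c else d])"
  by (rule ext, induct_tac x) (auto simp: lam_def)
lemma era_hom: "era c = hom (\<lambda>x. if x = c then [] else [x])"
  by (rule ext, induct_tac x) (auto simp: era_def)

lemma lam_idem[simp]: "lam c d (lam c d y) = lam c d y"
  by (induct y) (auto simp: lam_def)
lemma era_idem[simp]: "era c (era c y) = era c y"
  by (simp add: era_def)

lemma ump_lam: "ump g \<Longrightarrow> lam c d (g (lam c d y)) = lam c d (g y)"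
proof -
  assume u: "ump g"
  have "hom (\<lambda>x. [if x = c then c else d]) (lam c d y) = hom (\<lambda>x. [if x = c then c else d]) y"
    using lam_idem[of c d y] unfolding lam_hom .
  then have "hom (\<lambda>x. [if x = c then c else d]) (g (lam c d y)) = hom (\<lambda>x. [if x = c then c else d]) (g y)"
    using u unfolding ump_def by blast
  then show ?thesis unfolding lam_hom .
qed
lemma ump_era: "ump g \<Longrightarrow> era c (g (era c y)) = era c (g y)"
proof -
  assume u: "ump g"
  have "hom (\<lambda>x. if x = c then [] else [x]) (era c y) = hom (\<lambda>x. if x = c then [] else [x]) y"
    using era_idem[of c y] unfolding era_hom .
  then have "hom (\<lambda>x. if x = c then [] else [x]) (g (era c y)) = hom (\<lambda>x. if x = c then [] else [x]) (g y)"
    using u unfolding ump_def by blast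
  then show ?thesis unfolding era_hom .
qed

lemma sub_notin: "t \<notin> set y \<Longrightarrow> sub t A y = y"
  by (induct y) (auto simp: sub_def)
lemma sub_simps[simp]: "sub t A [] = []" "sub t A (x # w) = (if x = t then A else [x]) @ sub t A w"
  by (simp_all add: sub_def)

lemma ump_sub: "ump g \<Longrightarrow> t \<notin> set y \<Longrightarrow> sub t y (g y) = sub t y (g [t])"
proof -
  assume u: "ump g" and t: "t \<notin> set y"
  have "sub t y y = sub t y [t]" using sub_notin[OF t] by simp
  with u show ?thesis unfolding ump_def sub_def by blast
qed

lemma sub_Nil: "A \<noteq> [] \<Longrightarrow> sub t A z = [] \<longleftrightarrow> z = []"
  by (cases z) auto

lemma K2: "prefix v (sub t A z) \<Longrightarrow> prefix v (sub u B z) \<Longrightarrow> t \<notin> set v \<Longrightarrow> u \<notin> set v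
   \<Longrightarrow> t \<noteq> u \<Longrightarrow> prefix v z"
proof (induct z arbitrary: v)
  case Nil then show ?case by simp
next
  case (Cons a z)
  show ?case
  proof (cases v)
    case Nil then show ?thesis by simp
  next
    case (Cons b v')
    show ?thesis
    proof (cases "a = t \<or> a = u")
      case True
      then show ?thesis using Cons.prems \<open>v = b # v'\<close> by (auto split: if_splits)
    next
      case False
      then have "prefix v' (sub t A z)" "prefix v' (sub u B z)" "b = a"
        using Cons.prems \<open>v = b # v'\<close> by auto
      then show ?thesis using Cons.hyps Cons.prems \<open>v = b # v'\<close> by auto
    qed
  qed
qed

lemma K1: "prefix (lam t d v) (lam t d z) \<Longrightarrow> prefix v (sub t A z) \<Longrightarrow> t \<notin> set v \<Longrightarrow> d \<noteq> t
   \<Longrightarrow> prefix v z"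
proof (induct z arbitrary: v)
  case Nil then show ?case by (simp add: lam_def)
next
  case (Cons a z)
  show ?case
  proof (cases v)
    case Nil then show ?thesis by simp
  next
    case (Cons b v')
    show ?thesis
    proof (cases "a = t")
      case True
      then show ?thesis using Cons.prems \<open>v = b # v'\<close> by (auto simp: lam_def split: if_splits)
    next
      case False
      then have "prefix v' (sub t A z)" "b = a" "prefix (lam t d v') (lam t d z)"
        using Cons.prems \<open>v = b # v'\<close> by (auto simp: lam_def)
      then show ?thesis using Cons.hyps Cons.prems \<open>v = b # v'\<close> by auto
    qed
  qed
qed

lemma KP: "prefix (lam c d v) (lam c d z) \<Longrightarrow> prefix (era c v) (era c z) \<Longrightarrow> d \<noteq> c
   \<Longrightarrow> prefix v z"
proof (induct z arbitrary: v)
  case Nil then show ?case by (simp add: lam_def)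
next
  case (Cons a z)
  show ?case
  proof (cases v)
    case Nil then show ?thesis by simp
  next
    case (Cons b v')
    show ?thesis
    proof (cases "a = c")
      case True
      then show ?thesis using Cons.prems Cons.hyps \<open>v = b # v'\<close> by (auto simp: lam_def era_def split: if_splits)
    next
      case False
      then show ?thesis using Cons.prems Cons.hyps \<open>v = b # v'\<close> by (auto simp: lam_def era_def split: if_splits)
    qed
  qed
qed



lemma U_avoid:
  assumes u: "ump g" and e: "g [e] = []" and ey: "e \<notin> set y" and y: "y \<noteq> []"
  shows "g y = []"
proof -
  have "sub e y (g y) = sub e y (g [e])" using ump_sub[OF u ey] .
  then have "sub e y (g y) = []" using e by simp
  then show ?thesis using sub_Nil[OF y] by blast
qed

lemma U_E:
  fixes g :: "'a list \<Rightarrow> 'a list"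
  assumes three: "\<And>x y::'a. \<exists>z. z \<noteq> x \<and> z \<noteq> y"
    and u: "ump g" and c: "g [c] = []"
  shows "g y = []"
proof -
  obtain d where d: "d \<noteq> c" using three[of c c] by blast
  obtain e where e: "e \<noteq> c" "e \<noteq> d" using three[of c d] by blast
  have gd: "g [d] = []" using U_avoid[OF u c] d by simp
  have ge: "g [e] = []" using U_avoid[OF u c] e by simp
  have "era c (g []) = era c (g [c])" using ump_era[OF u, of c "[c]"] by (simp add: era_def)
  then have 1: "\<forall>x\<in>set (g []). x = c" using c by (auto simp: era_def filter_empty_conv)
  have "era d (g []) = era d (g [d])" using ump_era[OF u, of d "[d]"] by (simp add: era_def)
  then have 2: "\<forall>x\<in>set (g []). x = d" using gd by (auto simp: era_def filter_empty_conv)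
  have g0: "g [] = []" using 1 2 d by (cases "g []") auto
  have "g (lam c d y) = []"
  proof (cases "lam c d y = []")
    case True then show ?thesis using g0 by simp
  next
    case False
    have "e \<notin> set (lam c d y)" using e by (auto simp: lam_def)
    then show ?thesis using U_avoid[OF u ge _ False] by simp
  qed
  then have "lam c d (g y) = []" using ump_lam[OF u, of c d y] by (simp add: lam_def)
  then show ?thesis by (simp add: lam_def)
qed

lemma U_first:
  assumes u: "ump g" and tt: "t \<noteq> t'"
  shows "sub t' [t] (g [t']) = sub t' [t] (g [t])"
proof -
  have "sub t' [t] [t'] = sub t' [t] [t]" using tt by simp
  then show ?thesis using u unfolding ump_def sub_def by blast
qed

lemma hd_sub: "z \<noteq> [] \<Longrightarrow> hd (sub t' [t] z) = (if hd z = t' then t else hd z)"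
  by (cases z) auto

lemma classify:
  assumes three: "\<And>x y::'a. \<exists>z. z \<noteq> x \<and> z \<noteq> y"
    and H: "\<And>t t'. t \<noteq> t' \<Longrightarrow> (if \<phi> t' = t' then t else \<phi> t') = (if \<phi> t = t' then t else (\<phi> t::'a))"
  shows "(\<forall>t. \<phi> t = t) \<or> (\<exists>s. \<forall>t. \<phi> t = s)"
proof (cases "\<forall>t. \<phi> t = t")
  case True then show ?thesis by blast
next
  case False
  then obtain t where t: "\<phi> t \<noteq> t" by blast
  define s where "s = \<phi> t"
  have out: "\<phi> u = s" if "u \<noteq> t" "u \<noteq> s" for u
    using H[of t u] that t s_def by (auto split: if_splits)
  have "\<phi> s = s"
  proof -
    have "\<phi> s = s \<or> \<phi> s = t" using H[of t s] t s_def by (auto split: if_splits)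
    moreover obtain v where v: "v \<noteq> s" "v \<noteq> t" using three[of s t] by blast
    moreover have "\<phi> v = s" using out v by blast
    ultimately show ?thesis using H[of v s] t s_def by (auto split: if_splits)
  qed
  then have "\<forall>u. \<phi> u = s" using out s_def by metis
  then show ?thesis by blast
qed

lemma U_A:
  fixes g :: "'a list \<Rightarrow> 'a list"
  assumes three: "\<And>x y::'a. \<exists>z. z \<noteq> x \<and> z \<noteq> y"
    and u: "ump g" and A: "\<And>t. \<exists>R. g [t] = t # R"
  shows "prefix y (g y)"
proof -
  have sub_pre: "prefix y (sub t y (g y))" if "t \<notin> set y" for t y
  proof -
    obtain R where "g [t] = t # R" using A by blast
    then show ?thesis using ump_sub[OF u that] by simp
  qed
  have A1: "prefix y (g y)" if "t \<notin> set y" "u' \<notin> set y" "t \<noteq> u'" for t u' y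
    using K2[OF sub_pre[OF that(1)] sub_pre[OF that(2)] that] .
  have A2: "prefix y (g y)" if ty: "t \<notin> set y" for t y
  proof -
    obtain d where d: "d \<noteq> t" using three[of t t] by blast
    obtain e where e: "e \<noteq> t" "e \<noteq> d" using three[of t d] by blast
    have "t \<notin> set (lam t d y)" "e \<notin> set (lam t d y)" using ty d e by (auto simp: lam_def)
    then have "prefix (lam t d y) (g (lam t d y))" using A1 e by blast
    then have "prefix (lam t d (lam t d y)) (lam t d (g (lam t d y)))"
      unfolding lam_def by (rule map_mono_prefix)
    then have "prefix (lam t d y) (lam t d (g y))" using ump_lam[OF u] by simp
    then show ?thesis using K1[OF _ sub_pre[OF ty] ty d] by blast
  qed
  obtain c d where cd: "c \<noteq> (d::'a)" using three[of undefined undefined] by blast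
  obtain e where e: "e \<noteq> c" "e \<noteq> d" using three[of c d] by blast
  have "e \<notin> set (lam c d y)" using e by (auto simp: lam_def)
  then have "prefix (lam c d y) (g (lam c d y))" by (rule A2)
  then have "prefix (lam c d (lam c d y)) (lam c d (g (lam c d y)))"
    unfolding lam_def by (rule map_mono_prefix)
  then have 1: "prefix (lam c d y) (lam c d (g y))" using ump_lam[OF u] by simp
  have "c \<notin> set (era c y)" by (simp add: era_def)
  then have "prefix (era c y) (g (era c y))" by (rule A2)
  then have "prefix (era c (era c y)) (era c (g (era c y)))"
    unfolding era_def by (rule filter_mono_prefix)
  then have 2: "prefix (era c y) (era c (g y))" using ump_era[OF u] by simp
  show ?thesis using KP[OF 1 2] cd by blast
qed



lemma U_B:
  fixes g :: "'a list \<Rightarrow> 'a list"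
  assumes three: "\<And>x y::'a. \<exists>z. z \<noteq> x \<and> z \<noteq> y"
    and u: "ump g" and B: "\<And>t. \<exists>R. g [t] = s # R"
  shows "\<exists>R. g y = s # R"
proof -
  have B0: "g y \<noteq> [] \<and> (\<forall>a r. g y = a # r \<longrightarrow> a = t \<or> a = s)" if ty: "t \<notin> set y" "t \<noteq> s" for t y
  proof -
    obtain R where R: "g [t] = s # R" using B by blast
    have "sub t y (g y) = s # sub t y R" using ump_sub[OF u ty(1)] R ty(2) by simp
    then show ?thesis by (cases "g y") (auto split: if_splits)
  qed
  have B1: "\<exists>R. g y = s # R" if "t \<notin> set y" "t \<noteq> s" "u' \<notin> set y" "u' \<noteq> s" "t \<noteq> u'" for t u' y
    using B0[OF that(1,2)] B0[OF that(3,4)] that(5) by (cases "g y") auto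
  have B2: "\<exists>R. g y = s # R" if ty: "t \<notin> set y" "t \<noteq> s" for t y
  proof -
    obtain e where e: "e \<noteq> t" "e \<noteq> s" using three[of t s] by blast
    have "t \<notin> set (lam t s y)" "e \<notin> set (lam t s y)" using ty e by (auto simp: lam_def)
    then obtain r where r: "g (lam t s y) = s # r" using B1 e ty by metis
    have "lam t s (g y) = lam t s (g (lam t s y))" using ump_lam[OF u] by simp
    also have "\<dots> = s # lam t s r" using r ty by (simp add: lam_def)
    finally obtain a r' where ar: "g y = a # r'" "a \<noteq> t" using ty(2) by (cases "g y") (auto simp: lam_def split: if_splits)
    then show ?thesis using B0[OF ty] by blast
  qed
  obtain d where d: "d \<noteq> s" using three[of s s] by blast
  obtain t where t: "t \<noteq> s" "t \<noteq> d" using three[of s d] by blast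
  have "t \<notin> set (lam s d y)" using t by (auto simp: lam_def)
  then obtain r where r: "g (lam s d y) = s # r" using B2 t by metis
  have "lam s d (g y) = lam s d (g (lam s d y))" using ump_lam[OF u] by simp
  also have "\<dots> = s # lam s d r" using r by (simp add: lam_def)
  finally show ?thesis using d by (cases "g y") (auto simp: lam_def split: if_splits)
qed

lemma U_tri:
  fixes g :: "'a list \<Rightarrow> 'a list"
  assumes three: "\<And>x y::'a. \<exists>z. z \<noteq> x \<and> z \<noteq> y"
    and u: "ump g"
  shows "(\<forall>y. g y = []) \<or> (\<exists>s. \<forall>y. \<exists>R. g y = s # R) \<or> (\<forall>y. prefix y (g y))"
proof (cases "\<exists>c. g [c] = []")
  case True
  then show ?thesis using U_E[OF three u] by blast
next
  case False
  define \<phi> where "\<phi> t = hd (g [t])" for t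
  have ne: "g [t] \<noteq> []" for t using False by blast
  have H: "(if \<phi> t' = t' then t else \<phi> t') = (if \<phi> t = t' then t else \<phi> t)" if "t \<noteq> t'" for t t'
    using arg_cong[OF U_first[OF u that], of hd] hd_sub[OF ne] unfolding \<phi>_def by simp
  have gt: "g [t] = \<phi> t # tl (g [t])" for t using ne[of t] unfolding \<phi>_def by simp
  from classify[OF three H] show ?thesis
  proof
    assume "\<forall>t. \<phi> t = t"
    then have "\<And>t. \<exists>R. g [t] = t # R" using gt by metis
    then show ?thesis using U_A[OF three u] by blast
  next
    assume "\<exists>s. \<forall>t. \<phi> t = s"
    then obtain s where "\<forall>t. \<phi> t = s" by blast
    then have "\<And>t. \<exists>R. g [t] = s # R" using gt by metis
    then show ?thesis using U_B[OF three u] by blast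
  qed
qed



definition mp :: "nat \<Rightarrow> ('a list list \<Rightarrow> 'a list) \<Rightarrow> bool" where
  "mp k f \<longleftrightarrow> (\<forall>\<sigma> xs ys. length xs = k \<longrightarrow> length ys = k \<longrightarrow>
     (\<forall>i<k. hom \<sigma> (xs ! i) = hom \<sigma> (ys ! i)) \<longrightarrow> hom \<sigma> (f xs) = hom \<sigma> (f ys))"

lemma slice: "mp k f \<Longrightarrow> length xs = k \<Longrightarrow> i < k \<Longrightarrow> ump (\<lambda>y. f (xs[i := y]))"
  unfolding mp_def ump_def by (auto simp: nth_list_update)

context
  fixes three :: bool
  assumes three: "\<And>x y::'a. \<exists>z. z \<noteq> x \<and> z \<noteq> y"
begin

lemma H_a: fixes g :: "'a list \<Rightarrow> 'a list"
  assumes u: "ump g" and g: "g [c] = v # r" and vc: "v \<noteq> c"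
  shows "\<exists>R. g y = v # R"
  using U_tri[OF three u] g vc by (metis list.distinct(1) list.inject prefix_Cons)

lemma H_b: fixes g :: "'a list \<Rightarrow> 'a list"
  assumes u: "ump g" and g1: "g [u1] = u1 # r1" and g2: "g [u2] = u2 # r2" and uu: "u1 \<noteq> u2"
  shows "prefix y (g y)"
  using U_tri[OF three u] g1 g2 uu by (metis list.distinct(1) list.inject)

lemma H_c: fixes g :: "'a list \<Rightarrow> 'a list"
  assumes u: "ump g" and g: "g [c] = []"
  shows "g y = []"
  using U_tri[OF three u] g by (metis list.distinct(1) prefix_Nil Nil_prefix)

lemma transfer:
  fixes f :: "'a list list \<Rightarrow> 'a list"
  assumes m: "mp k f" and lR: "length R = k" and lett: "\<forall>j<k. \<exists>c. R ! j = [c] \<and> Q c"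
    and step: "\<And>g c. ump g \<Longrightarrow> Q c \<Longrightarrow> P (g [c]) \<Longrightarrow> (\<forall>y. P (g y))"
    and base: "P (f R)"
  shows "length xs = k \<Longrightarrow> P (f xs)"
proof -
  have all: "\<forall>xs. length xs = k \<longrightarrow> (\<forall>j. n \<le> j \<longrightarrow> j < k \<longrightarrow> xs ! j = R ! j) \<longrightarrow> P (f xs)" for n
  proof (induct n)
    case 0
    show ?case
    proof (intro allI impI)
      fix xs :: "'a list list" assume "length xs = k" "\<forall>j. 0 \<le> j \<longrightarrow> j < k \<longrightarrow> xs ! j = R ! j"
      then have "xs = R" using lR by (auto intro: nth_equalityI)
      then show "P (f xs)" using base by simp
    qed
  next
    case (Suc n)
    show ?case
    proof (intro allI impI)
      fix xs :: "'a list list" assume l: "length xs = k" and c: "\<forall>j. Suc n \<le> j \<longrightarrow> j < k \<longrightarrow> xs ! j = R ! j"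
      show "P (f xs)"
      proof (cases "n < k")
        case False
        then show ?thesis using Suc l c by auto
      next
        case True
        define xs' where "xs' = xs[n := R ! n]"
        have l': "length xs' = k" using l by (simp add: xs'_def)
        have "\<forall>j. n \<le> j \<longrightarrow> j < k \<longrightarrow> xs' ! j = R ! j"
        proof (intro allI impI)
          fix j assume "n \<le> j" "j < k"
          then show "xs' ! j = R ! j" using c l
            by (cases "j = n") (auto simp: xs'_def nth_list_update)
        qed
        then have "P (f xs')" using Suc l' by blast
        obtain cc where cc: "R ! n = [cc]" "Q cc" using lett True by blast
        have u: "ump (\<lambda>y. f (xs'[n := y]))" using slice[OF m l' True] .
        have "xs'[n := [cc]] = xs'" using cc by (simp add: xs'_def)
        then have "P ((\<lambda>y. f (xs'[n := y])) [cc])" using \<open>P (f xs')\<close> by simp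
        then have "P (f (xs'[n := xs ! n]))" using step[OF u cc(2)] by blast
        moreover have "xs'[n := xs ! n] = xs" by (simp add: xs'_def)
        ultimately show ?thesis by simp
      qed
    qed
  qed
  show "length xs = k \<Longrightarrow> P (f xs)" using all[of k] by auto
qed

lemma transferA:
  fixes f :: "'a list list \<Rightarrow> 'a list"
  assumes m: "mp k f" and lR: "length R = k" and lett: "\<forall>j<k. \<exists>c. R ! j = [c]" and i: "i < k"
    and base: "\<And>y. prefix y (f (R[i := y]))"
  shows "length xs = k \<Longrightarrow> prefix (xs ! i) (f xs)"
proof -
  have all: "\<forall>xs. length xs = k \<longrightarrow> (\<forall>j. n \<le> j \<longrightarrow> j < k \<longrightarrow> j \<noteq> i \<longrightarrow> xs ! j = R ! j) \<longrightarrow> prefix (xs ! i) (f xs)" for n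
  proof (induct n)
    case 0
    show ?case
    proof (intro allI impI)
      fix xs :: "'a list list" assume "length xs = k" "\<forall>j. 0 \<le> j \<longrightarrow> j < k \<longrightarrow> j \<noteq> i \<longrightarrow> xs ! j = R ! j"
      then have "xs = R[i := xs ! i]" using lR
        apply (simp add: list_eq_iff_nth_eq[of xs] del: list_eq_iff_nth_eq)
        using i by (metis nth_list_update_eq nth_list_update_neq)
      then show "prefix (xs ! i) (f xs)" using base by metis
    qed
  next
    case (Suc n)
    show ?case
    proof (intro allI impI)
      fix xs :: "'a list list" assume l: "length xs = k" and c: "\<forall>j. Suc n \<le> j \<longrightarrow> j < k \<longrightarrow> j \<noteq> i \<longrightarrow> xs ! j = R ! j"
      show "prefix (xs ! i) (f xs)"
      proof (cases "n < k \<and> n \<noteq> i")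
        case False
        have "\<forall>j. n \<le> j \<longrightarrow> j < k \<longrightarrow> j \<noteq> i \<longrightarrow> xs ! j = R ! j"
        proof (intro allI impI)
          fix j assume "n \<le> j" "j < k" "j \<noteq> i"
          then have "Suc n \<le> j" using False by (cases "j = n") auto
          then show "xs ! j = R ! j" using c \<open>j < k\<close> \<open>j \<noteq> i\<close> by blast
        qed
        then show ?thesis using Suc l by blast
      next
        case True
        obtain cc where cc: "R ! n = [cc]" using lett True by blast
        have letter: "\<exists>r. f (xs[i := [v]]) = v # r" if vc: "v \<noteq> cc" for v
        proof -
          define X where "X = xs[i := [v]]"
          have lX: "length X = k" using l by (simp add: X_def)
          have "\<forall>j. n \<le> j \<longrightarrow> j < k \<longrightarrow> j \<noteq> i \<longrightarrow> X[n := [cc]] ! j = R ! j"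
          proof (intro allI impI)
            fix j assume "n \<le> j" "j < k" "j \<noteq> i"
            then show "X[n := [cc]] ! j = R ! j" using c cc lX
              by (cases "j = n") (auto simp: X_def nth_list_update)
          qed
          then have "prefix (X[n := [cc]] ! i) (f (X[n := [cc]]))"
            using Suc lX by simp
          then have "prefix [v] (f (X[n := [cc]]))" using True i l by (simp add: X_def nth_list_update)
          then obtain r where r: "(\<lambda>y. f (X[n := y])) [cc] = v # r" by (auto simp: prefix_def)
          from H_a[OF slice[OF m lX] r vc] True obtain R' where "f (X[n := xs ! n]) = v # R'" by blast
          moreover have "X[n := xs ! n] = xs[i := [v]]" using True by (metis X_def list_update_id list_update_swap)
          ultimately show ?thesis by auto
        qed
        obtain u1 where u1: "u1 \<noteq> cc" using three[of cc cc] by blast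
        obtain u2 where u2: "u2 \<noteq> cc" "u2 \<noteq> u1" using three[of cc u1] by blast
        have uu: "u1 \<noteq> cc" "u2 \<noteq> cc" "u1 \<noteq> u2" using u1 u2 by auto
        obtain r1 where r1: "f (xs[i := [u1]]) = u1 # r1" using letter uu by blast
        obtain r2 where r2: "f (xs[i := [u2]]) = u2 # r2" using letter uu by blast
        have "prefix (xs ! i) ((\<lambda>y. f (xs[i := y])) (xs ! i))"
          by (rule H_b[OF slice[OF m l i], of u1 r1 u2 r2]) (use r1 r2 uu in simp_all)
        then show ?thesis by simp
      qed
    qed
  qed
  show "length xs = k \<Longrightarrow> prefix (xs ! i) (f xs)" using all[of k] by auto
qed

end


definition ev :: "('a + nat) list \<Rightarrow> 'a list list \<Rightarrow> 'a list" where
  "ev as xs = concat (map (\<lambda>a. case a of Inl s \<Rightarrow> [s] | Inr i \<Rightarrow> xs ! i) as)"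

context
  fixes three :: bool
  assumes three: "\<And>x y::'a. \<exists>z. z \<noteq> x \<and> z \<noteq> y"
begin

definition Goal :: "nat \<Rightarrow> ('a list list \<Rightarrow> 'a list) \<Rightarrow> bool" where
  "Goal k f \<longleftrightarrow> (\<exists>i<k. \<forall>xs. length xs = k \<longrightarrow> prefix (xs ! i) (f xs)) \<or>
     (\<exists>s. \<forall>xs. length xs = k \<longrightarrow> (\<exists>r. f xs = s # r)) \<or> (\<forall>xs. length xs = k \<longrightarrow> f xs = [])"

lemma const_case:
  fixes f :: "'a list list \<Rightarrow> 'a list"
  assumes m: "mp k f" and R: "length R = k" "\<forall>j<k. R ! j = [c]"
  shows "Goal k f \<or> (\<exists>r. f R = c # r)"
proof (cases "f R")
  case Nil
  have "\<forall>xs. length xs = k \<longrightarrow> f xs = []"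
  proof (intro allI impI)
    fix xs :: "'a list list" assume "length xs = k"
    show "f xs = []"
      by (rule transfer[OF three m R(1), where Q = "\<lambda>_. True" and P = "\<lambda>w. w = []"])
         (use R(2) in blast, use H_c[OF three] in blast, use Nil in simp, use \<open>length xs = k\<close> in simp)
  qed
  then show ?thesis unfolding Goal_def by blast
next
  case (Cons a r)
  show ?thesis
  proof (cases "a = c")
    case True then show ?thesis using Cons by blast
  next
    case False
    have "\<forall>xs. length xs = k \<longrightarrow> (\<exists>r. f xs = a # r)"
    proof (intro allI impI)
      fix xs :: "'a list list" assume "length xs = k"
      show "\<exists>r. f xs = a # r"
        by (rule transfer[OF three m R(1), where Q = "\<lambda>c'. c' \<noteq> a" and P = "\<lambda>w. \<exists>r. w = a # r"])
           (use R(2) False in blast, use H_a[OF three] in blast, use Cons in simp, use \<open>length xs = k\<close> in simp)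
    qed
    then show ?thesis unfolding Goal_def by blast
  qed
qed

lemma dich:
  fixes f :: "'a list list \<Rightarrow> 'a list"
  assumes m: "mp k f"
  shows "Goal k f"
proof -
  obtain d :: 'a where True by blast
  obtain t where t: "t \<noteq> d" using three[of d d] by blast
  define T where "T m = map (\<lambda>j. if j < m then [t] else [d]) [0..<k]" for m
  have lT: "length (T m) = k" for m by (simp add: T_def)
  have claim: "m \<le> k \<Longrightarrow> Goal k f \<or> (\<exists>r. f (T m) = d # r)" for m
  proof (induct m)
    case 0
    show ?case by (rule const_case[OF m lT]) (simp add: T_def)
  next
    case (Suc m)
    then have mk: "m < k" by simp
    show ?case
    proof (cases "Goal k f")
      case True then show ?thesis by blast
    next
      case False
      then obtain r where r: "f (T m) = d # r" using Suc mk by auto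
      define g where "g y = f ((T m)[m := y])" for y
      have u: "ump g" unfolding g_def by (rule slice[OF m lT mk])
      have gdd: "(T m)[m := [d]] = T m"
        unfolding T_def by (rule nth_equalityI) (use mk in \<open>auto simp: nth_list_update\<close>)
      have gt: "(T m)[m := [t]] = T (Suc m)"
        unfolding T_def by (rule nth_equalityI) (use mk in \<open>auto simp: nth_list_update less_Suc_eq\<close>)
      have gd: "g [d] = d # r" using r gdd by (simp add: g_def)
      from U_tri[OF three u] show ?thesis
      proof (elim disjE)
        assume "\<forall>y. g y = []" then show ?thesis using gd by simp
      next
        assume "\<exists>s. \<forall>y. \<exists>R. g y = s # R"
        then obtain s where s: "\<forall>y. \<exists>R. g y = s # R" by blast
        then have "s = d" using gd by (metis list.inject)
        then show ?thesis using s gt unfolding g_def by metis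
      next
        assume A: "\<forall>y. prefix y (g y)"
        have "\<forall>xs. length xs = k \<longrightarrow> prefix (xs ! m) (f xs)"
        proof (intro allI impI)
          fix xs :: "'a list list" assume "length xs = k"
          show "prefix (xs ! m) (f xs)"
            by (rule transferA[OF three m lT[of m] _ mk]) (simp add: T_def, use A in \<open>simp add: g_def\<close>, use \<open>length xs = k\<close> in simp)
        qed
        then show ?thesis unfolding Goal_def using mk by blast
      qed
    qed
  qed
  from claim[of k] show ?thesis
  proof
    assume "\<exists>r. f (T k) = d # r"
    then obtain r where r: "f (T k) = d # r" by blast
    have "\<forall>xs. length xs = k \<longrightarrow> (\<exists>r. f xs = d # r)"
    proof (intro allI impI)
      fix xs :: "'a list list" assume "length xs = k"
      show "\<exists>r. f xs = d # r"
        by (rule transfer[OF three m lT[of k], where Q = "\<lambda>c'. c' \<noteq> d" and P = "\<lambda>w. \<exists>r. w = d # r"])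
           (use t in \<open>simp add: T_def\<close>, use H_a[OF three] in blast, use r in simp, use \<open>length xs = k\<close> in simp)
    qed
    then show ?thesis unfolding Goal_def by blast
  qed simp
qed

lemma dich':
  fixes f :: "'a list list \<Rightarrow> 'a list"
  assumes m: "mp k f"
  shows "(\<exists>i<k. \<forall>xs. length xs = k \<longrightarrow> prefix (xs ! i) (f xs)) \<or>
     (\<exists>s. \<forall>xs. length xs = k \<longrightarrow> (\<exists>r. f xs = s # r)) \<or> (\<forall>xs. length xs = k \<longrightarrow> f xs = [])"
  using dich[OF m] unfolding Goal_def .

end


lemma ev_Cons[simp]: "ev (Inl s # as) xs = s # ev as xs" "ev (Inr i # as) xs = xs ! i @ ev as xs"
  "ev [] xs = []"
  by (simp_all add: ev_def)

lemma poly: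
  fixes c :: 'a and f :: "'a list list \<Rightarrow> 'a list"
  assumes three: "\<And>x y::'a. \<exists>z. z \<noteq> x \<and> z \<noteq> y"
  shows "mp k f \<Longrightarrow> \<exists>as. (\<forall>i. Inr i \<in> set as \<longrightarrow> i < k) \<and> (\<forall>xs. length xs = k \<longrightarrow> f xs = ev as xs)"
proof (induct "length (f (replicate k [c]))" arbitrary: f rule: less_induct)
  case less
  note m = less.prems
  define cs where "cs = replicate k [c]"
  have lcs: "length cs = k" by (simp add: cs_def)
  from dich'[OF three m] show ?case
  proof (elim disjE exE conjE)
    fix i assume i: "i < k" and A: "\<forall>xs. length xs = k \<longrightarrow> prefix (xs ! i) (f xs)"
    define f' where "f' xs = drop (length (xs ! i)) (f xs)" for xs
    have dec: "f xs = xs ! i @ f' xs" if "length xs = k" for xs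
      using A that unfolding f'_def prefix_def by auto
    have m': "mp k f'" unfolding mp_def
    proof (intro allI impI)
      fix \<sigma> :: "'a \<Rightarrow> 'a list" and xs ys :: "'a list list"
      assume l: "length xs = k" "length ys = (k::nat)"
        and h: "\<forall>i<k. hom \<sigma> (xs ! i) = hom \<sigma> (ys ! i)"
      have "hom \<sigma> (f xs) = hom \<sigma> (f ys)" using m l h unfolding mp_def by blast
      then have "hom \<sigma> (xs ! i) @ hom \<sigma> (f' xs) = hom \<sigma> (ys ! i) @ hom \<sigma> (f' ys)"
        using dec l by (metis hom_simps(3))
      then show "hom \<sigma> (f' xs) = hom \<sigma> (f' ys)" using h i by simp
    qed
    have "f cs = [c] @ f' cs" using dec[OF lcs] i by (simp add: cs_def)
    then have "length (f' (replicate k [c])) < length (f (replicate k [c]))" by (simp add: cs_def)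
    from less.hyps[OF this m'] obtain as where as: "\<forall>i. Inr i \<in> set as \<longrightarrow> i < k"
      "\<forall>xs. length xs = k \<longrightarrow> f' xs = ev as xs" by blast
    show ?thesis
      by (rule exI[of _ "Inr i # as"]) (use as i dec in auto)
  next
    fix s assume B: "\<forall>xs. length xs = k \<longrightarrow> (\<exists>r. f xs = s # r)"
    define f' where "f' xs = tl (f xs)" for xs
    have dec: "f xs = s # f' xs" if "length xs = k" for xs
      using B that unfolding f'_def by auto
    have m': "mp k f'" unfolding mp_def
    proof (intro allI impI)
      fix \<sigma> :: "'a \<Rightarrow> 'a list" and xs ys :: "'a list list"
      assume l: "length xs = k" "length ys = (k::nat)"
        and h: "\<forall>i<k. hom \<sigma> (xs ! i) = hom \<sigma> (ys ! i)"
      have "hom \<sigma> (f xs) = hom \<sigma> (f ys)" using m l h unfolding mp_def by blast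
      then have "\<sigma> s @ hom \<sigma> (f' xs) = \<sigma> s @ hom \<sigma> (f' ys)"
        using dec l by (metis hom_simps(2))
      then show "hom \<sigma> (f' xs) = hom \<sigma> (f' ys)" by simp
    qed
    have "f cs = s # f' cs" using dec[OF lcs] .
    then have "length (f' (replicate k [c])) < length (f (replicate k [c]))" by (simp add: cs_def)
    from less.hyps[OF this m'] obtain as where as: "\<forall>i. Inr i \<in> set as \<longrightarrow> i < k"
      "\<forall>xs. length xs = k \<longrightarrow> f' xs = ev as xs" by blast
    show ?thesis
      by (rule exI[of _ "Inl s # as"]) (use as dec in auto)
  next
    assume "\<forall>xs. length xs = k \<longrightarrow> f xs = []"
    then show ?thesis by (intro exI[of _ "[]"]) simp
  qed
qed

lemma cp_mp: fixes f :: "'a list list \<Rightarrow> 'a list"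
  shows "congruence_preserving k f \<Longrightarrow> mp k f"
  unfolding mp_def
proof (intro allI impI)
  fix \<sigma> :: "'a \<Rightarrow> 'a list" and xs ys :: "'a list list"
  assume cp: "congruence_preserving k f" and l: "length xs = k" "length ys = k"
    and h: "\<forall>i<k. hom \<sigma> (xs ! i) = hom \<sigma> (ys ! i)"
  define R where "R = {(u, v). hom \<sigma> u = hom \<sigma> v}"
  have "congruence R" unfolding congruence_def R_def
    by (auto intro!: equivI refl_onI symI transI)
  then have "(f xs, f ys) \<in> R" using cp l h unfolding congruence_preserving_def R_def by auto
  then show "hom \<sigma> (f xs) = hom \<sigma> (f ys)" by (simp add: R_def)
qed

lemma word_pow_cong:
  assumes "congruence R" "(u, v) \<in> R"
  shows "(word_pow u p, word_pow v p) \<in> R"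
proof (induct p)
  case 0
  have "([], []) \<in> R" using assms(1) unfolding congruence_def equiv_def refl_on_def by blast
  then show ?case by (simp add: word_pow_def)
next
  case (Suc p)
  then show ?case using assms unfolding congruence_def word_pow_def by simp
qed

lemma concat_cong:
  assumes "congruence R" "\<forall>j\<in>set js. (F j, G j) \<in> R"
  shows "(concat (map F js), concat (map G js)) \<in> R"
  using assms(2)
proof (induct js)
  case Nil
  then show ?case using assms(1) unfolding congruence_def equiv_def refl_on_def by auto
next
  case (Cons a js)
  then show ?case using assms(1) unfolding congruence_def by simp
qed

lemma map_shift: "map G [1..<Suc (length as)] = map H as"
  if "\<And>j. G (Suc j) = H (as ! j)" for G H and as :: "'b list"
proof -
  have "[1..<Suc (length as)] = map Suc [0..<length as]" by (simp add: map_Suc_upt)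
  then have "map G [1..<Suc (length as)] = map (\<lambda>j. H (as ! j)) [0..<length as]"
    using that by simp
  also have "\<dots> = map H as" by (rule nth_equalityI) auto
  finally show ?thesis .
qed

theorem mainTheorem19:
  fixes f :: "('a::finite) list list \<Rightarrow> 'a list" and k :: nat
  assumes "card (UNIV :: 'a set) \<ge> 3" and "k \<ge> 1"
  shows "congruence_preserving k f \<longleftrightarrow>
    (\<exists>(n::nat) (w::nat \<Rightarrow> 'a list) (p::nat \<Rightarrow> nat) (idx::nat \<Rightarrow> nat).
       (\<forall>j\<in>{1..n}. idx j < k) \<and>
       (\<forall>xs. length xs = k \<longrightarrow>
          f xs = w 0 @ concat (map (\<lambda>j. word_pow (xs ! idx j) (p j) @ w j) [1..<Suc n])))"
proof
  have three: "\<exists>z. z \<noteq> x \<and> z \<noteq> y" for x y :: 'a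
  proof (rule ccontr)
    assume "\<not> (\<exists>z. z \<noteq> x \<and> z \<noteq> y)"
    then have "UNIV \<subseteq> {x, y}" by blast
    then have "card (UNIV :: 'a set) \<le> card {x, y}" by (intro card_mono) auto
    also have "\<dots> \<le> 2" by (simp add: card_insert_le_m1)
    finally show False using assms(1) by simp
  qed
  assume "congruence_preserving k f"
  then have "mp k f" by (rule cp_mp)
  from poly[OF three this] obtain as where as: "\<forall>i. Inr i \<in> set as \<longrightarrow> i < k"
    "\<forall>xs. length xs = k \<longrightarrow> f xs = ev as xs" by blast
  define w where "w j = (if j = 0 then [] else case as ! (j - 1) of Inl s \<Rightarrow> [s] | Inr _ \<Rightarrow> [])" for j
  define p where "p j = (case as ! (j - 1) of Inl s \<Rightarrow> 0 | Inr _ \<Rightarrow> (1::nat))" for j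
  define idx where "idx j = (case as ! (j - 1) of Inl s \<Rightarrow> 0 | Inr i \<Rightarrow> i)" for j
  show "\<exists>(n::nat) (w::nat \<Rightarrow> 'a list) (p::nat \<Rightarrow> nat) (idx::nat \<Rightarrow> nat).
       (\<forall>j\<in>{1..n}. idx j < k) \<and>
       (\<forall>xs. length xs = k \<longrightarrow>
          f xs = w 0 @ concat (map (\<lambda>j. word_pow (xs ! idx j) (p j) @ w j) [1..<Suc n]))"
  proof (intro exI conjI allI impI)
    show "\<forall>j\<in>{1..length as}. idx j < k"
    proof
      fix j assume j: "j \<in> {1..length as}"
      then have mem: "as ! (j - 1) \<in> set as" by auto
      show "idx j < k"
      proof (cases "as ! (j - 1)")
        case (Inl s) then show ?thesis using assms(2) by (simp add: idx_def)
      next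
        case (Inr i) then show ?thesis using as(1) mem by (simp add: idx_def)
      qed
    qed
  next
    fix xs :: "'a list list" assume l: "length xs = k"
    have "map (\<lambda>j. word_pow (xs ! idx j) (p j) @ w j) [1..<Suc (length as)] =
      map (\<lambda>a. case a of Inl s \<Rightarrow> [s] | Inr i \<Rightarrow> xs ! i) as"
      by (rule map_shift) (simp add: w_def p_def idx_def word_pow_def split: sum.split)
    then show "f xs = w 0 @ concat (map (\<lambda>j. word_pow (xs ! idx j) (p j) @ w j) [1..<Suc (length as)])"
      using as(2) l by (simp add: w_def ev_def)
  qed
next
  assume "\<exists>(n::nat) (w::nat \<Rightarrow> 'a list) (p::nat \<Rightarrow> nat) (idx::nat \<Rightarrow> nat).
       (\<forall>j\<in>{1..n}. idx j < k) \<and>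
       (\<forall>xs. length xs = k \<longrightarrow>
          f xs = w 0 @ concat (map (\<lambda>j. word_pow (xs ! idx j) (p j) @ w j) [1..<Suc n]))"
  then obtain n w p idx where ix: "\<forall>j\<in>{1..n}. idx j < k" and
    fe: "\<forall>xs. length xs = k \<longrightarrow>
          f xs = w 0 @ concat (map (\<lambda>j. word_pow (xs ! idx j) (p j) @ w j) [1..<Suc n])" by blast
  show "congruence_preserving k f" unfolding congruence_preserving_def
  proof (intro allI impI)
    fix R :: "('a list \<times> 'a list) set" and us vs :: "'a list list"
    assume R: "congruence R" and l: "length us = k" "length vs = k"
      and uv: "\<forall>i<k. (us ! i, vs ! i) \<in> R"
    have refl: "(x, x) \<in> R" for x using R unfolding congruence_def equiv_def refl_on_def by blast
    have app: "(a @ b, a' @ b') \<in> R" if "(a, a') \<in> R" "(b, b') \<in> R" for a b a' b'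
      using R that unfolding congruence_def by blast
    have "\<forall>j\<in>set [1..<Suc n]. (word_pow (us ! idx j) (p j) @ w j, word_pow (vs ! idx j) (p j) @ w j) \<in> R"
    proof
      fix j assume "j \<in> set [1..<Suc n]"
      then have "idx j < k" using ix by auto
      then show "(word_pow (us ! idx j) (p j) @ w j, word_pow (vs ! idx j) (p j) @ w j) \<in> R"
        using app word_pow_cong[OF R] uv refl by blast
    qed
    from concat_cong[OF R this] have "(concat (map (\<lambda>j. word_pow (us ! idx j) (p j) @ w j) [1..<Suc n]),
        concat (map (\<lambda>j. word_pow (vs ! idx j) (p j) @ w j) [1..<Suc n])) \<in> R" .
    then show "(f us, f vs) \<in> R" using fe l app refl by simp
  qed
qed

end
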